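(* Let $\mathcal{T}$ be a tangle of order $k$ in a connectivity system $(E,\lambda)$. Let $n\geq 4$, and let $\Phi=(P_1,\ldots,P_n)$ be a $\mathcal{T}$-strong partition of $E$. If $P_i\cup P_{i+1}$ is $k$-separating for each $i\in \{1,\dots,n-1\}$, then $\Phi$ is a $k$-flower in $\mathcal{T}$.
   Context: A connectivity system is a pair $(E,\lambda)$ with $E$ finite and $\lambda$ an integer-valued symmetric ($\lambda(X)=\lambda(E-X)$) submodular function on subsets of $E$. $X$ is $k$-separating if $\lambda(X)\le k$. A tangle of order $k$ is a collection $\mathcal T$ of subsets of $E$ with (T1) $\lambda(A)<k$ for $A\in\mathcal T$; (T2) if $\lambda(A)\le k-1$ then $A\in\mathcal T$ or $E-A\in\mathcal T$; (T3) $A\cup B\cup C\ne E$ for $A,B,C\in\mathcal T$; (T4) $E-\{e\}\notin\mathcal T$ for $e\in E$. A set is $\mathcal T$-weak if contained in a member of $\mathcal T$, and $\mathcal T$-strong otherwise; a partition is $\mathcal T$-strong if all its parts are. A $k$-flower in $\mathcal T$ is a $\mathcal T$-strong partition $(P_1,\dots,P_n)$ of $E$ such that for every $i$, both $P_i$ and $P_i\cup P_{i+1}$ are $k$-separating, subscripts taken modulo $n$. *)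

theory Defs
  imports Main
begin

definition connectivity_system :: "'a set \<Rightarrow> ('a set \<Rightarrow> int) \<Rightarrow> bool" where
  "connectivity_system E lam \<longleftrightarrow> finite E
     \<and> (\<forall>X. X \<subseteq> E \<longrightarrow> lam X = lam (E - X))
     \<and> (\<forall>X Y. X \<subseteq> E \<longrightarrow> Y \<subseteq> E \<longrightarrow> lam X + lam Y \<ge> lam (X \<union> Y) + lam (X \<inter> Y))"

definition k_separating :: "('a set \<Rightarrow> int) \<Rightarrow> int \<Rightarrow> 'a set \<Rightarrow> bool" where
  "k_separating lam k X \<longleftrightarrow> lam X \<le> k"

definition tangle :: "'a set \<Rightarrow> ('a set \<Rightarrow> int) \<Rightarrow> int \<Rightarrow> 'a set set \<Rightarrow> bool" where
  "tangle E lam k T \<longleftrightarrow> T \<subseteq> Pow E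
     \<and> (\<forall>A\<in>T. lam A < k)
     \<and> (\<forall>A. A \<subseteq> E \<longrightarrow> lam A \<le> k - 1 \<longrightarrow> A \<in> T \<or> E - A \<in> T)
     \<and> (\<forall>A\<in>T. \<forall>B\<in>T. \<forall>C\<in>T. A \<union> B \<union> C \<noteq> E)
     \<and> (\<forall>e\<in>E. E - {e} \<notin> T)"

definition T_weak :: "'a set set \<Rightarrow> 'a set \<Rightarrow> bool" where
  "T_weak T X \<longleftrightarrow> (\<exists>A\<in>T. X \<subseteq> A)"

definition T_strong :: "'a set set \<Rightarrow> 'a set \<Rightarrow> bool" where
  "T_strong T X \<longleftrightarrow> \<not> T_weak T X"

definition is_partition :: "'a set \<Rightarrow> nat \<Rightarrow> (nat \<Rightarrow> 'a set) \<Rightarrow> bool" where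
  "is_partition E n P \<longleftrightarrow> (\<forall>i\<in>{1..n}. P i \<noteq> {})
     \<and> (\<forall>i\<in>{1..n}. \<forall>j\<in>{1..n}. i \<noteq> j \<longrightarrow> P i \<inter> P j = {})
     \<and> (\<Union>i\<in>{1..n}. P i) = E"

definition strong_partition :: "'a set set \<Rightarrow> 'a set \<Rightarrow> nat \<Rightarrow> (nat \<Rightarrow> 'a set) \<Rightarrow> bool" where
  "strong_partition T E n P \<longleftrightarrow> is_partition E n P \<and> (\<forall>i\<in>{1..n}. T_strong T (P i))"

text \<open>Cyclic successor of index i in {1..n}: i+1, with n+1 read as 1.\<close>
definition cyc_succ :: "nat \<Rightarrow> nat \<Rightarrow> nat" where
  "cyc_succ n i = (i mod n) + 1"

definition k_flower :: "('a set \<Rightarrow> int) \<Rightarrow> int \<Rightarrow> 'a set set \<Rightarrow> 'a set \<Rightarrow> nat \<Rightarrow> (nat \<Rightarrow> 'a set) \<Rightarrow> bool" where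
  "k_flower lam k T E n P \<longleftrightarrow> strong_partition T E n P
     \<and> (\<forall>i\<in>{1..n}. k_separating lam k (P i) \<and> k_separating lam k (P i \<union> P (cyc_succ n i)))"

end

theory Submission
  imports Defs
begin

lemma strong_mono: "T_strong T A \<Longrightarrow> A \<subseteq> B \<Longrightarrow> T_strong T B"
  by (auto simp: T_strong_def T_weak_def)

lemma strong_notin: "T_strong T A \<Longrightarrow> A \<notin> T"
  by (auto simp: T_strong_def T_weak_def)

lemma big:
  assumes "tangle E lam k T" "B \<subseteq> E" "T_strong T B" "T_strong T (E - B)"
  shows "lam B \<ge> k"
proof (rule ccontr)
  assume "\<not> lam B \<ge> k"
  hence "lam B \<le> k - 1" by simp
  with assms(1,2) have "B \<in> T \<or> E - B \<in> T" unfolding tangle_def by blast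
  with strong_notin[OF assms(3)] strong_notin[OF assms(4)] show False by blast
qed

lemma inter_lemma:
  assumes "connectivity_system E lam" "tangle E lam k T" "X \<subseteq> E" "Y \<subseteq> E"
    "lam X \<le> k" "lam Y \<le> k" "T_strong T (X \<union> Y)" "T_strong T (E - (X \<union> Y))"
  shows "lam (X \<inter> Y) \<le> k"
proof -
  have "lam X + lam Y \<ge> lam (X \<union> Y) + lam (X \<inter> Y)"
    using assms(1,3,4) unfolding connectivity_system_def by blast
  moreover have "lam (X \<union> Y) \<ge> k" using big[OF assms(2) _ assms(7,8)] assms(3,4) by blast
  ultimately show ?thesis using assms(5,6) by linarith
qed

lemma union_lemma:
  assumes "connectivity_system E lam" "tangle E lam k T" "X \<subseteq> E" "Y \<subseteq> E"
    "lam X \<le> k" "lam Y \<le> k" "T_strong T (X \<inter> Y)" "T_strong T (E - (X \<inter> Y))"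
  shows "lam (X \<union> Y) \<le> k"
proof -
  have "lam X + lam Y \<ge> lam (X \<union> Y) + lam (X \<inter> Y)"
    using assms(1,3,4) unfolding connectivity_system_def by blast
  moreover have "lam (X \<inter> Y) \<ge> k" using big[OF assms(2) _ assms(7,8)] assms(3,4) by blast
  ultimately show ?thesis using assms(5,6) by linarith
qed

theorem lemma4p2:
  fixes E :: "'a set" and lam :: "'a set \<Rightarrow> int" and k :: int
    and T :: "'a set set" and n :: nat and P :: "nat \<Rightarrow> 'a set"
  assumes "connectivity_system E lam"
    and "tangle E lam k T"
    and "n \<ge> 4"
    and "strong_partition T E n P"
    and "\<forall>i\<in>{1..n-1}. k_separating lam k (P i \<union> P (i + 1))"
  shows "k_flower lam k T E n P"
proof -
  note cs = assms(1) and tg = assms(2)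
  have disj: "\<And>i j. 1 \<le> i \<Longrightarrow> i \<le> n \<Longrightarrow> 1 \<le> j \<Longrightarrow> j \<le> n \<Longrightarrow> i \<noteq> j \<Longrightarrow> P i \<inter> P j = {}"
    using assms(4) unfolding strong_partition_def is_partition_def by auto
  have cover: "(\<Union>i\<in>{1..n}. P i) = E"
    using assms(4) unfolding strong_partition_def is_partition_def by auto
  have sub: "\<And>i. 1 \<le> i \<Longrightarrow> i \<le> n \<Longrightarrow> P i \<subseteq> E" using cover by auto
  have str: "\<And>i. 1 \<le> i \<Longrightarrow> i \<le> n \<Longrightarrow> T_strong T (P i)"
    using assms(4) unfolding strong_partition_def by auto
  have sep: "\<And>i. 1 \<le> i \<Longrightarrow> i + 1 \<le> n \<Longrightarrow> lam (P i \<union> P (i+1)) \<le> k"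
    using assms(5) unfolding k_separating_def by auto
  have csym: "\<forall>X. X \<subseteq> E \<longrightarrow> lam X = lam (E - X)"
    using cs[unfolded connectivity_system_def] by (elim conjE)
  have compl: "lam (E - X) = lam X" if "X \<subseteq> E" for X
    using csym[rule_format, OF that] by (rule sym)
  have mid: "lam (P i) \<le> k" if "2 \<le> i" "i \<le> n - 1" for i
  proof -
    obtain j where j: "1 \<le> j" "j \<le> n" "j \<noteq> i - 1" "j \<noteq> i" "j \<noteq> i + 1"
    proof (cases "i \<ge> 3")
      case True then show ?thesis using that[of 1] assms(3) by auto
    next
      case False then show ?thesis using that[of 4] assms(3) \<open>2 \<le> i\<close> by auto
    qed
    let ?X = "P (i-1) \<union> P i" and ?Y = "P i \<union> P (i+1)"
    have i1: "i - 1 + 1 = i" using that by auto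
    have X: "?X \<subseteq> E" "lam ?X \<le> k" using sub sep[of "i-1"] that assms(3) i1 by auto
    have Y: "?Y \<subseteq> E" "lam ?Y \<le> k" using sub sep[of i] that assms(3) by auto
    have s1: "T_strong T (?X \<union> ?Y)" by (rule strong_mono[OF str[of i]]) (use that assms(3) in auto)
    have d1: "P j \<inter> P (i-1) = {}" by (rule disj) (use j that assms(3) in auto)
    have d2: "P j \<inter> P i = {}" by (rule disj) (use j that assms(3) in auto)
    have d3: "P j \<inter> P (i+1) = {}" by (rule disj) (use j that assms(3) in auto)
    have "P j \<subseteq> E - (?X \<union> ?Y)"
      using sub[OF j(1,2)] d1 d2 d3 by auto
    hence s2: "T_strong T (E - (?X \<union> ?Y))" by (rule strong_mono[OF str[OF j(1,2)]])
    have L: "lam (?X \<inter> ?Y) \<le> k" using inter_lemma[OF cs tg X(1) Y(1) X(2) Y(2) s1 s2] .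
    have e1: "P (i-1) \<inter> P (i+1) = {}" by (rule disj) (use that assms(3) in auto)
    have e2: "P (i-1) \<inter> P i = {}" by (rule disj) (use that assms(3) in auto)
    have "?X \<inter> ?Y = P i" using e1 e2 by auto
    with L show ?thesis by simp
  qed
  have first: "lam (P 1) \<le> k"
  proof -
    let ?X = "P 1 \<union> P 2" and ?Y = "E - (P 2 \<union> P 3)"
    have X1: "?X \<subseteq> E" using sub[of 1] sub[of 2] assms(3) by auto
    have e: "(1::nat) + 1 = 2" "(2::nat) + 1 = 3" by simp_all
    have "lam (P 1 \<union> P (1+1)) \<le> k" by (rule sep) (use assms(3) in auto)
    hence X2: "lam ?X \<le> k" unfolding e .
    note X = X1 X2
    have "lam (P 2 \<union> P (2+1)) \<le> k" by (rule sep) (use assms(3) in auto)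
    hence "lam (P 2 \<union> P 3) \<le> k" unfolding e .
    moreover have "P 2 \<union> P 3 \<subseteq> E" using sub[of 2] sub[of 3] assms(3) by auto
    ultimately have Y: "?Y \<subseteq> E" "lam ?Y \<le> k" using compl by auto
    have d13: "P 1 \<inter> P 3 = {}" by (rule disj) (use assms(3) in auto)
    have d23: "P 2 \<inter> P 3 = {}" by (rule disj) (use assms(3) in auto)
    have d12: "P 1 \<inter> P 2 = {}" by (rule disj) (use assms(3) in auto)
    have U: "?X \<union> ?Y = E - P 3" using sub[of 1] sub[of 2] d13 d23 assms(3) by auto
    have s1: "T_strong T (?X \<union> ?Y)" by (rule strong_mono[OF str[of 1]]) (use assms(3) in auto)
    have "E - (?X \<union> ?Y) = P 3" using U sub[of 3] assms(3) by auto
    hence s2: "T_strong T (E - (?X \<union> ?Y))" using str[of 3] assms(3) by auto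
    have L: "lam (?X \<inter> ?Y) \<le> k" using inter_lemma[OF cs tg X(1) Y(1) X(2) Y(2) s1 s2] .
    have "?X \<inter> ?Y = P 1" using sub[of 1] d12 d13 assms(3) by auto
    with L show ?thesis by simp
  qed
  have last: "lam (P n) \<le> k"
  proof -
    define a where "a = n - 2"
    define b where "b = n - 1"
    have ab: "1 \<le> a" "a < b" "b < n" "b = a + 1" "n = b + 1" using assms(3) unfolding a_def b_def by auto
    have sa: "P a \<subseteq> E" by (rule sub) (use ab in auto)
    have sb: "P b \<subseteq> E" by (rule sub) (use ab in auto)
    have sn0: "P n \<subseteq> E" by (rule sub) (use ab in auto)
    let ?X = "P b \<union> P n" and ?Y = "E - (P a \<union> P b)"
    have X2: "lam (P b \<union> P (b+1)) \<le> k" by (rule sep) (use ab in auto)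
    have X: "?X \<subseteq> E" "lam ?X \<le> k" using sb sn0 apply blast using X2 ab(5) by simp
    have Y2: "lam (P a \<union> P (a+1)) \<le> k" by (rule sep) (use ab in auto)
    have Y1: "P a \<union> P b \<subseteq> E" using sa sb by blast
    have Y: "?Y \<subseteq> E" "lam ?Y \<le> k" apply blast using Y2 compl[OF Y1] ab(4) by simp
    have d1: "P b \<inter> P a = {}" by (rule disj) (use ab in auto)
    have d2: "P n \<inter> P a = {}" by (rule disj) (use ab in auto)
    have d3: "P n \<inter> P b = {}" by (rule disj) (use ab in auto)
    have U: "?X \<union> ?Y = E - P a" using X(1) d1 d2 by blast
    have sn: "T_strong T (P n)" by (rule str) (use ab in auto)
    have s1: "T_strong T (?X \<union> ?Y)" by (rule strong_mono[OF sn]) blast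
    have "E - (?X \<union> ?Y) = P a" using U sa by blast
    moreover have "T_strong T (P a)" by (rule str) (use ab in auto)
    ultimately have s2: "T_strong T (E - (?X \<union> ?Y))" by simp
    have L: "lam (?X \<inter> ?Y) \<le> k" using inter_lemma[OF cs tg X(1) Y(1) X(2) Y(2) s1 s2] .
    have "?X \<inter> ?Y = P n" using sn0 d2 d3 by blast
    with L show ?thesis by simp
  qed
  have parts: "lam (P i) \<le> k" if "1 \<le> i" "i \<le> n" for i
  proof -
    show ?thesis
    proof (cases "i = 1")
      case True thus ?thesis using first by simp
    next
      case F1: False
      show ?thesis
      proof (cases "i = n")
        case True thus ?thesis using last by simp
      next
        case False
        hence "2 \<le> i" "i \<le> n - 1" using F1 that by auto
        thus ?thesis by (rule mid)
      qed
    qed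
  qed
  have str1: "T_strong T (P 1)" using str[of 1] assms(3) by auto
  define V where "V j = (\<Union>i\<in>{2..j}. P i)" for j
  have Vsub: "V j \<subseteq> E" if "j \<le> n" for j
  proof -
    have "V j \<subseteq> (\<Union>i\<in>{1..n}. P i)" unfolding V_def using that by (intro UN_mono) auto
    thus ?thesis using cover by simp
  qed
  have Vb: "lam (V j) \<le> k" if "2 \<le> j" "j \<le> n - 1" for j
    using that
  proof (induction j rule: dec_induct)
    case base
    have "V 2 = P 2" unfolding V_def by auto
    thus ?case using parts[of 2] assms(3) by auto
  next
    case (step j)
    have Vs: "V (Suc j) = V j \<union> (P j \<union> P (Suc j))"
      using step(1) unfolding V_def by (auto simp: atLeastAtMostSuc_conv le_Suc_eq)
    have Vi: "V j \<inter> (P j \<union> P (Suc j)) = P j"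
    proof -
      have "P (Suc j) \<inter> P i = {}" if "i \<in> {2..j}" for i
        using disj[of "Suc j" i] that step(2,4) by auto
      moreover have "P j \<subseteq> V j" using step(1) unfolding V_def by auto
      ultimately show ?thesis unfolding V_def by blast
    qed
    have IH: "lam (V j) \<le> k" using step by auto
    have s2: "lam (P j \<union> P (Suc j)) \<le> k" using sep[of j] step by auto
    have "lam (V j \<union> (P j \<union> P (Suc j))) \<le> k"
    proof (rule union_lemma[OF cs tg _ _ IH s2])
      show "V j \<subseteq> E" using Vsub step by auto
      show "P j \<union> P (Suc j) \<subseteq> E" using sub step by auto
      show "T_strong T (V j \<inter> (P j \<union> P (Suc j)))" using Vi str[of j] step by auto
      have "j \<le> n" using step by auto
      hence "P 1 \<inter> P j = {}" using disj[of 1 j] step(1) by auto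
      hence "P 1 \<subseteq> E - P j" using sub[of 1] assms(3) by auto
      thus "T_strong T (E - V j \<inter> (P j \<union> P (Suc j)))" unfolding Vi
        using strong_mono[OF str1] by blast
    qed
    thus ?case using Vs by simp
  qed
  have EV: "E - V (n-1) = P 1 \<union> P n"
  proof
    show "E - V (n - 1) \<subseteq> P 1 \<union> P n"
    proof
      fix x assume x: "x \<in> E - V (n-1)"
      then obtain i where i: "i \<in> {1..n}" "x \<in> P i" using cover by auto
      hence "i \<notin> {2..n-1}" using x unfolding V_def by auto
      hence "i = 1 \<or> i = n" using i by auto
      thus "x \<in> P 1 \<union> P n" using i by auto
    qed
    have "P 1 \<inter> P i = {} \<and> P n \<inter> P i = {}" if "i \<in> {2..n-1}" for i
    proof -
      have "i \<le> n" "n \<noteq> i" "1 \<noteq> i" "1 \<le> i" using that assms(3) by auto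
      thus ?thesis using disj[of 1 i] disj[of n i] assms(3) by auto
    qed
    moreover have "P 1 \<subseteq> E" "P n \<subseteq> E" using sub[of 1] sub[of n] assms(3) by auto
    ultimately show "P 1 \<union> P n \<subseteq> E - V (n - 1)" unfolding V_def by blast
  qed
  have wrap: "lam (P n \<union> P 1) \<le> k"
    using Vb[of "n-1"] compl[OF Vsub[of "n-1"]] EV assms(3) by (simp add: Un_commute)
  show ?thesis unfolding k_flower_def
  proof (intro conjI ballI)
    show "strong_partition T E n P" by fact
  next
    fix i assume i: "i \<in> {1..n}"
    show "k_separating lam k (P i)" using parts i unfolding k_separating_def by auto
    show "k_separating lam k (P i \<union> P (cyc_succ n i))"
    proof (cases "i = n")
      case True thus ?thesis using wrap unfolding k_separating_def cyc_succ_def by simp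
    next
      case False
      hence "cyc_succ n i = i + 1" using i unfolding cyc_succ_def by auto
      thus ?thesis using sep[of i] i False unfolding k_separating_def by auto
    qed
  qed
qed

end
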